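(* Let an independent instance with $k$ signals ($2\le k\le n$) be $\rho_E$-optimal and let $\varphi^*$ be an optimal scheme with $k$ signals. Then ActionsGreedy computes a set $S\subseteq[n-1]$ of $k-1$ actions with \[f(S)\ge\Big(1-\big(1-\tfrac1k\big)^{k-1}\Big)u_{\mathcal S}(\varphi^* ).\]
   Context: Bayesian persuasion: receiver chooses one of actions $[n]$; the sender sends one of $k$ signals according to a committed scheme; receiver best-responds (ties in favor of sender); optimal = maximizes sender expected utility $u_{\mathcal S}$ among schemes with $k$ signals. Independent instance: action $i$ has independent type over $j\in[m]$ with probability $q_{ij}$, receiver value $\rho_{ij}$, sender value $\xi_{ij}$. $\rho_E=\max_i\sum_jq_{ij}\rho_{ij}$; actions numbered so $\sum_jq_{nj}\rho_{nj}=\rho_E$ and action $n$ maximizes $\sum_jq_{ij}\xi_{ij}$ among actions with $\sum_jq_{ij}\rho_{ij}=\rho_E$. $\rho_E$-optimal: some optimal scheme with $k$ signals gives the receiver conditional expected utility at least $\rho_E$ for every signal sent with positive probability. $g_i(z)=\max\{\sum_jx_{ij}\xi_{ij}:\sum_jx_{ij}\le z,\ \sum_jx_{ij}\rho_{ij}\ge\rho_E\sum_jx_{ij},\ 0\le x_{ij}\le q_{ij}\}$; $f(S)=\max\{\sum_{i\in S\cup\{n\}}g_i(z_i):\sum_{i\in S\cup\{n\}}z_i\le1,z_i\ge0\}$. ActionsGreedy: start with $S=\emptyset$ and, $k-1$ times, add an action $i\in[n-1]\setminus S$ maximizing $f(S\cup\{i\})-f(S)$. *)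

theory Defs
  imports Complex_Main "HOL-Library.FuncSet"
begin

text \<open>Independent Bayesian persuasion instance: actions 1..n, types 1..m,
  q i j = probability that action i has type j, rho i j receiver value,
  xi i j sender value.\<close>

definition states :: "nat \<Rightarrow> nat \<Rightarrow> (nat \<Rightarrow> nat) set" where
  "states n m = PiE {1..n} (\<lambda>_. {1..m})"

definition prior :: "nat \<Rightarrow> (nat \<Rightarrow> nat \<Rightarrow> real) \<Rightarrow> (nat \<Rightarrow> nat) \<Rightarrow> real" where
  "prior n q \<theta> = (\<Prod>i\<in>{1..n}. q i (\<theta> i))"

definition is_scheme :: "nat \<Rightarrow> nat \<Rightarrow> nat \<Rightarrow> ((nat \<Rightarrow> nat) \<Rightarrow> nat \<Rightarrow> real) \<Rightarrow> bool" where
  "is_scheme n m k \<phi> =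
     (\<forall>\<theta>\<in>states n m. (\<forall>s\<in>{1..k}. 0 \<le> \<phi> \<theta> s) \<and> (\<Sum>s=1..k. \<phi> \<theta> s) = 1)"

definition sig_prob :: "nat \<Rightarrow> nat \<Rightarrow> (nat \<Rightarrow> nat \<Rightarrow> real) \<Rightarrow> ((nat \<Rightarrow> nat) \<Rightarrow> nat \<Rightarrow> real) \<Rightarrow> nat \<Rightarrow> real" where
  "sig_prob n m q \<phi> s = (\<Sum>\<theta>\<in>states n m. prior n q \<theta> * \<phi> \<theta> s)"

text \<open>Joint (unnormalized) expected utilities: E[u(a) ; signal s].\<close>
definition joint_val :: "nat \<Rightarrow> nat \<Rightarrow> (nat \<Rightarrow> nat \<Rightarrow> real) \<Rightarrow> (nat \<Rightarrow> nat \<Rightarrow> real)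
    \<Rightarrow> ((nat \<Rightarrow> nat) \<Rightarrow> nat \<Rightarrow> real) \<Rightarrow> nat \<Rightarrow> nat \<Rightarrow> real" where
  "joint_val n m q u \<phi> s a = (\<Sum>\<theta>\<in>states n m. prior n q \<theta> * \<phi> \<theta> s * u a (\<theta> a))"

definition best_responses :: "nat \<Rightarrow> nat \<Rightarrow> (nat \<Rightarrow> nat \<Rightarrow> real) \<Rightarrow> (nat \<Rightarrow> nat \<Rightarrow> real)
    \<Rightarrow> ((nat \<Rightarrow> nat) \<Rightarrow> nat \<Rightarrow> real) \<Rightarrow> nat \<Rightarrow> nat set" where
  "best_responses n m q rho \<phi> s =
     {a\<in>{1..n}. \<forall>b\<in>{1..n}. joint_val n m q rho \<phi> s b \<le> joint_val n m q rho \<phi> s a}"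

definition sender_util :: "nat \<Rightarrow> nat \<Rightarrow> nat \<Rightarrow> (nat \<Rightarrow> nat \<Rightarrow> real) \<Rightarrow> (nat \<Rightarrow> nat \<Rightarrow> real)
    \<Rightarrow> (nat \<Rightarrow> nat \<Rightarrow> real) \<Rightarrow> ((nat \<Rightarrow> nat) \<Rightarrow> nat \<Rightarrow> real) \<Rightarrow> real" where
  "sender_util n m k q rho xi \<phi> =
     (\<Sum>s=1..k. Max (joint_val n m q xi \<phi> s ` best_responses n m q rho \<phi> s))"

definition optimal_scheme :: "nat \<Rightarrow> nat \<Rightarrow> nat \<Rightarrow> (nat \<Rightarrow> nat \<Rightarrow> real) \<Rightarrow> (nat \<Rightarrow> nat \<Rightarrow> real)
    \<Rightarrow> (nat \<Rightarrow> nat \<Rightarrow> real) \<Rightarrow> ((nat \<Rightarrow> nat) \<Rightarrow> nat \<Rightarrow> real) \<Rightarrow> bool" where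
  "optimal_scheme n m k q rho xi \<phi> =
     (is_scheme n m k \<phi> \<and>
      (\<forall>\<psi>. is_scheme n m k \<psi> \<longrightarrow> sender_util n m k q rho xi \<psi> \<le> sender_util n m k q rho xi \<phi>))"

definition rhoE :: "nat \<Rightarrow> nat \<Rightarrow> (nat \<Rightarrow> nat \<Rightarrow> real) \<Rightarrow> (nat \<Rightarrow> nat \<Rightarrow> real) \<Rightarrow> real" where
  "rhoE n m q rho = Max ((\<lambda>i. \<Sum>j=1..m. q i j * rho i j) ` {1..n})"

definition receiver_cond_util :: "nat \<Rightarrow> nat \<Rightarrow> (nat \<Rightarrow> nat \<Rightarrow> real) \<Rightarrow> (nat \<Rightarrow> nat \<Rightarrow> real)
    \<Rightarrow> ((nat \<Rightarrow> nat) \<Rightarrow> nat \<Rightarrow> real) \<Rightarrow> nat \<Rightarrow> real" where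
  "receiver_cond_util n m q rho \<phi> s =
     Max (joint_val n m q rho \<phi> s ` {1..n}) / sig_prob n m q \<phi> s"

definition rhoE_optimal :: "nat \<Rightarrow> nat \<Rightarrow> nat \<Rightarrow> (nat \<Rightarrow> nat \<Rightarrow> real) \<Rightarrow> (nat \<Rightarrow> nat \<Rightarrow> real)
    \<Rightarrow> (nat \<Rightarrow> nat \<Rightarrow> real) \<Rightarrow> bool" where
  "rhoE_optimal n m k q rho xi =
     (\<exists>\<phi>. optimal_scheme n m k q rho xi \<phi> \<and>
        (\<forall>s\<in>{1..k}. sig_prob n m q \<phi> s > 0 \<longrightarrow>
            receiver_cond_util n m q rho \<phi> s \<ge> rhoE n m q rho))"

text \<open>g_i(z): the maximum is attained, so it is rendered as the supremum.\<close>
definition gfun :: "nat \<Rightarrow> nat \<Rightarrow> (nat \<Rightarrow> nat \<Rightarrow> real) \<Rightarrow> (nat \<Rightarrow> nat \<Rightarrow> real)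
    \<Rightarrow> (nat \<Rightarrow> nat \<Rightarrow> real) \<Rightarrow> nat \<Rightarrow> real \<Rightarrow> real" where
  "gfun n m q rho xi i z = Sup {(\<Sum>j=1..m. x j * xi i j) | x.
      (\<forall>j\<in>{1..m}. 0 \<le> x j \<and> x j \<le> q i j) \<and>
      (\<Sum>j=1..m. x j) \<le> z \<and>
      (\<Sum>j=1..m. x j * rho i j) \<ge> rhoE n m q rho * (\<Sum>j=1..m. x j)}"

definition ffun :: "nat \<Rightarrow> nat \<Rightarrow> (nat \<Rightarrow> nat \<Rightarrow> real) \<Rightarrow> (nat \<Rightarrow> nat \<Rightarrow> real)
    \<Rightarrow> (nat \<Rightarrow> nat \<Rightarrow> real) \<Rightarrow> nat set \<Rightarrow> real" where
  "ffun n m q rho xi S = Sup {(\<Sum>i\<in>insert n S. gfun n m q rho xi i (z i)) | z.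
      (\<forall>i\<in>insert n S. 0 \<le> z i) \<and> (\<Sum>i\<in>insert n S. z i) \<le> 1}"

text \<open>A run of ActionsGreedy (any tie-breaking): the list of actions added in order.\<close>
definition greedy_run :: "nat \<Rightarrow> nat \<Rightarrow> nat \<Rightarrow> (nat \<Rightarrow> nat \<Rightarrow> real) \<Rightarrow> (nat \<Rightarrow> nat \<Rightarrow> real)
    \<Rightarrow> (nat \<Rightarrow> nat \<Rightarrow> real) \<Rightarrow> nat list \<Rightarrow> bool" where
  "greedy_run n m k q rho xi xs =
     (length xs = k - 1 \<and>
      (\<forall>t < k - 1.
         xs ! t \<in> {1..n-1} - set (take t xs) \<and>
         (\<forall>i\<in>{1..n-1} - set (take t xs).
            ffun n m q rho xi (insert i (set (take t xs))) - ffun n m q rho xi (set (take t xs))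
            \<le> ffun n m q rho xi (insert (xs ! t) (set (take t xs))) - ffun n m q rho xi (set (take t xs)))))"

end

theory Submission
  imports Defs
begin


lemma sup_add_le:
  fixes X Y :: "real set"
  assumes "X \<noteq> {}" "Y \<noteq> {}" "bdd_above X" "bdd_above Y"
    and "\<And>x y. x \<in> X \<Longrightarrow> y \<in> Y \<Longrightarrow> x + y \<le> c"
  shows "Sup X + Sup Y \<le> c"
proof -
  have "\<And>y. y \<in> Y \<Longrightarrow> Sup X \<le> c - y"
  proof -
    fix y assume "y \<in> Y"
    thus "Sup X \<le> c - y" using assms(1) by (intro cSup_least) (auto simp: algebra_simps assms(5))
  qed
  hence "\<And>y. y \<in> Y \<Longrightarrow> y \<le> c - Sup X" by fastforce
  hence "Sup Y \<le> c - Sup X" using assms by (intro cSup_least) auto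
  thus ?thesis by simp
qed

definition HS :: "(nat \<Rightarrow> real \<Rightarrow> real) \<Rightarrow> nat set \<Rightarrow> real set" where
  "HS G A = {(\<Sum>i\<in>A. G i (z i)) | z. (\<forall>i\<in>A. 0 \<le> z i) \<and> (\<Sum>i\<in>A. z i) \<le> 1}"

definition HH :: "(nat \<Rightarrow> real \<Rightarrow> real) \<Rightarrow> nat set \<Rightarrow> real" where
  "HH G A = Sup (HS G A)"

definition goodG :: "(nat \<Rightarrow> real \<Rightarrow> real) \<Rightarrow> nat set \<Rightarrow> (nat \<Rightarrow> real) \<Rightarrow> bool" where
  "goodG G I B = ((\<forall>i\<in>I. \<forall>z\<ge>0. 0 \<le> G i z \<and> G i z \<le> B i) \<and>
     (\<forall>i\<in>I. \<forall>x\<ge>0. \<forall>y\<ge>0. \<forall>l. 0 \<le> l \<and> l \<le> 1 \<longrightarrow>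
        G i x + G i y \<le> G i (l*x+(1-l)*y) + G i ((1-l)*x + l*y)))"

lemma HS_ne: "HS G A \<noteq> {}"
  unfolding HS_def by (rule ccontr) (auto dest!: spec[of _ "\<lambda>_. 0"])

lemma HS_bdd:
  assumes "goodG G I B" "A \<subseteq> I"
  shows "bdd_above (HS G A)"
proof -
  have "\<And>x. x \<in> HS G A \<Longrightarrow> x \<le> (\<Sum>i\<in>A. B i)"
    unfolding HS_def using assms unfolding goodG_def
    by (auto intro!: sum_mono)
  thus ?thesis by (meson bdd_aboveI)
qed

lemma HS_upper:
  assumes "goodG G I B" "A \<subseteq> I" "\<forall>i\<in>A. 0 \<le> z i" "(\<Sum>i\<in>A. z i) \<le> 1"
  shows "(\<Sum>i\<in>A. G i (z i)) \<le> HH G A"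
  unfolding HH_def using assms HS_bdd[OF assms(1,2)]
  by (intro cSup_upper) (auto simp: HS_def)

lemma HH_least:
  assumes "\<And>z. \<forall>i\<in>A. 0 \<le> z i \<Longrightarrow> (\<Sum>i\<in>A. z i) \<le> 1 \<Longrightarrow> (\<Sum>i\<in>A. G i (z i)) \<le> c"
  shows "HH G A \<le> c"
  unfolding HH_def using assms HS_ne[of G A]
  by (intro cSup_least) (auto simp: HS_def)

lemma HH_nonneg:
  assumes "goodG G I B" "A \<subseteq> I"
  shows "0 \<le> HH G A"
proof -
  have "(\<Sum>i\<in>A. G i ((\<lambda>_. 0) i)) \<le> HH G A"
    by (rule HS_upper[OF assms]) auto
  moreover have "0 \<le> (\<Sum>i\<in>A. G i ((\<lambda>_. 0::real) i))"
    using assms unfolding goodG_def by (intro sum_nonneg) auto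
  ultimately show ?thesis by linarith
qed

lemma HH_mono:
  assumes "goodG G I B" "A \<subseteq> B'" "B' \<subseteq> I" "finite B'"
  shows "HH G A \<le> HH G B'"
proof (rule HH_least)
  fix z :: "nat \<Rightarrow> real" assume z: "\<forall>i\<in>A. 0 \<le> z i" "(\<Sum>i\<in>A. z i) \<le> 1"
  define z' where "z' i = (if i \<in> A then z i else (0::real))" for i
  have fA: "finite A" using assms finite_subset by blast
  have "(\<Sum>i\<in>B'. z' i) = (\<Sum>i\<in>A. z' i) + (\<Sum>i\<in>B'-A. z' i)"
    using assms by (metis add.commute sum.subset_diff)
  also have "\<dots> = (\<Sum>i\<in>A. z i)" by (simp add: z'_def)
  finally have s1: "(\<Sum>i\<in>B'. z' i) \<le> 1" using z by simp
  have "(\<Sum>i\<in>B'. G i (z' i)) = (\<Sum>i\<in>A. G i (z' i)) + (\<Sum>i\<in>B'-A. G i (z' i))"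
    using assms by (metis add.commute sum.subset_diff)
  also have "(\<Sum>i\<in>B'-A. G i (z' i)) \<ge> 0"
    using assms unfolding goodG_def z'_def by (intro sum_nonneg) auto
  moreover have "(\<Sum>i\<in>A. G i (z' i)) = (\<Sum>i\<in>A. G i (z i))" by (simp add: z'_def)
  ultimately have "(\<Sum>i\<in>A. G i (z i)) \<le> (\<Sum>i\<in>B'. G i (z' i))" by linarith
  also have "\<dots> \<le> HH G B'"
    by (rule HS_upper[OF assms(1,3)]) (use z s1 in \<open>auto simp: z'_def\<close>)
  finally show "(\<Sum>i\<in>A. G i (z i)) \<le> HH G B'" .
qed

lemma HH_pair:
  assumes g: "goodG G I B" and A: "finite A" "A \<subseteq> I" and ab: "a \<in> I" "b \<in> I" "a \<notin> A" "b \<notin> A" "a \<noteq> b"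
  shows "HH G (insert a (insert b A)) + HH G A \<le> HH G (insert a A) + HH G (insert b A)"
  unfolding HH_def
proof (rule sup_add_le)
  show "HS G (insert a (insert b A)) \<noteq> {}" "HS G A \<noteq> {}" by (rule HS_ne)+
  show "bdd_above (HS G (insert a (insert b A)))" "bdd_above (HS G A)"
    using HS_bdd[OF g] A ab by auto
  fix x y assume "x \<in> HS G (insert a (insert b A))" "y \<in> HS G A"
  then obtain z w where xz: "x = (\<Sum>i\<in>insert a (insert b A). G i (z i))"
    and z: "\<forall>i\<in>insert a (insert b A). 0 \<le> z i" "(\<Sum>i\<in>insert a (insert b A). z i) \<le> 1"
    and yw: "y = (\<Sum>i\<in>A. G i (w i))" and w: "\<forall>i\<in>A. 0 \<le> w i" "(\<Sum>i\<in>A. w i) \<le> 1"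
    unfolding HS_def by blast
  define u where "u = z a"
  define v where "v = z b"
  have u0: "0 \<le> u" "0 \<le> v" using z by (auto simp: u_def v_def)
  define l where "l = (if u + v = 0 then 0 else u / (u+v))"
  have l01: "0 \<le> l" "l \<le> 1" using u0 by (auto simp: l_def divide_simps)
  have lu: "l * (u+v) = u" using u0 by (auto simp: l_def)
  have sz: "(\<Sum>i\<in>insert a (insert b A). z i) = u + v + (\<Sum>i\<in>A. z i)"
    using A ab by (simp add: u_def v_def)
  hence szA: "(\<Sum>i\<in>A. z i) \<le> 1 - u - v" using z by simp
  have sG: "(\<Sum>i\<in>insert a (insert b A). G i (z i)) = G a u + G b v + (\<Sum>i\<in>A. G i (z i))"
    using A ab by (simp add: u_def v_def)
  define r1 where "r1 i = (if i = a then u else l * z i + (1-l) * w i)" for i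
  define r2 where "r2 i = (if i = b then v else (1-l) * z i + l * w i)" for i
  have zA: "\<forall>i\<in>A. 0 \<le> z i" using z by auto
  have r1n: "\<forall>i\<in>insert a A. 0 \<le> r1 i" using zA w l01 u0 by (auto simp: r1_def)
  have r2n: "\<forall>i\<in>insert b A. 0 \<le> r2 i" using zA w l01 u0 by (auto simp: r2_def)
  have r1A: "(\<Sum>i\<in>A. r1 i) = l * (\<Sum>i\<in>A. z i) + (1-l) * (\<Sum>i\<in>A. w i)"
  proof -
    have "(\<Sum>i\<in>A. r1 i) = (\<Sum>i\<in>A. l * z i + (1-l) * w i)"
      using ab by (intro sum.cong) (auto simp: r1_def)
    thus ?thesis by (simp add: sum.distrib sum_distrib_left)
  qed
  have r2A: "(\<Sum>i\<in>A. r2 i) = (1-l) * (\<Sum>i\<in>A. z i) + l * (\<Sum>i\<in>A. w i)"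
  proof -
    have "(\<Sum>i\<in>A. r2 i) = (\<Sum>i\<in>A. (1-l) * z i + l * w i)"
      using ab by (intro sum.cong) (auto simp: r2_def)
    thus ?thesis by (simp add: sum.distrib sum_distrib_left)
  qed
  have "l * (\<Sum>i\<in>A. z i) \<le> l * (1-u-v)" using szA l01 by (intro mult_left_mono) auto
  moreover have "(1-l) * (\<Sum>i\<in>A. w i) \<le> (1-l) * 1" using w l01 by (intro mult_left_mono) auto
  ultimately have r1s: "(\<Sum>i\<in>insert a A. r1 i) \<le> 1"
    using A ab r1A lu by (simp add: r1_def algebra_simps)
  have "(1-l) * (\<Sum>i\<in>A. z i) \<le> (1-l) * (1-u-v)" using szA l01 by (intro mult_left_mono) auto
  moreover have "l * (\<Sum>i\<in>A. w i) \<le> l * 1" using w l01 by (intro mult_left_mono) auto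
  ultimately have r2s: "(\<Sum>i\<in>insert b A. r2 i) \<le> 1"
    using A ab r2A lu by (simp add: r2_def algebra_simps)
  have h1: "(\<Sum>i\<in>insert a A. G i (r1 i)) \<le> HH G (insert a A)"
    by (rule HS_upper[OF g]) (use A ab r1n r1s in auto)
  have h2: "(\<Sum>i\<in>insert b A. G i (r2 i)) \<le> HH G (insert b A)"
    by (rule HS_upper[OF g]) (use A ab r2n r2s in auto)
  have e1: "(\<Sum>i\<in>insert a A. G i (r1 i)) = G a u + (\<Sum>i\<in>A. G i (l * z i + (1-l) * w i))"
    using A ab by (simp add: r1_def) (auto intro!: sum.cong)
  have e2: "(\<Sum>i\<in>insert b A. G i (r2 i)) = G b v + (\<Sum>i\<in>A. G i ((1-l) * z i + l * w i))"
    using A ab by (simp add: r2_def) (auto intro!: sum.cong)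
  have "(\<Sum>i\<in>A. G i (z i)) + (\<Sum>i\<in>A. G i (w i)) \<le>
        (\<Sum>i\<in>A. G i (l * z i + (1-l) * w i)) + (\<Sum>i\<in>A. G i ((1-l) * z i + l * w i))"
    unfolding sum.distrib[symmetric]
  proof (rule sum_mono)
    fix i assume i: "i \<in> A"
    thus "G i (z i) + G i (w i) \<le> G i (l * z i + (1-l) * w i) + G i ((1-l) * z i + l * w i)"
      using g A zA w l01 unfolding goodG_def by blast
  qed
  hence "x + y \<le> HH G (insert a A) + HH G (insert b A)"
    using h1 h2 e1 e2 sG xz yw by linarith
  thus "x + y \<le> Sup (HS G (insert a A)) + Sup (HS G (insert b A))" by (simp add: HH_def)
qed

lemma HH_dimret:
  assumes g: "goodG G I B" and D: "finite D" "D \<subseteq> I" "D \<inter> A = {}"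
    and A: "finite A" "A \<subseteq> I" and x: "x \<in> I" "x \<notin> A" "x \<notin> D"
  shows "HH G (insert x (A \<union> D)) - HH G (A \<union> D) \<le> HH G (insert x A) - HH G A"
  using D x
proof (induction D rule: finite_induct)
  case empty thus ?case by simp
next
  case (insert d D)
  have "HH G (insert x (insert d (A \<union> D))) + HH G (A \<union> D) \<le> HH G (insert x (A \<union> D)) + HH G (insert d (A \<union> D))"
    using insert A by (intro HH_pair[OF g]) auto
  moreover have "HH G (insert x (A \<union> D)) - HH G (A \<union> D) \<le> HH G (insert x A) - HH G A"
    using insert by auto
  ultimately show ?case by simp
qed

lemma HH_subadd:
  assumes g: "goodG G I B" and D: "finite D" "D \<subseteq> I" "D \<inter> A = {}"
    and A: "finite A" "A \<subseteq> I"
  shows "HH G (A \<union> D) - HH G A \<le> (\<Sum>d\<in>D. HH G (insert d A) - HH G A)"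
  using D
proof (induction D rule: finite_induct)
  case empty thus ?case by simp
next
  case (insert d D)
  have "HH G (insert d (A \<union> D)) - HH G (A \<union> D) \<le> HH G (insert d A) - HH G A"
    using insert A by (intro HH_dimret[OF g]) auto
  thus ?case using insert by simp
qed



lemma sup_lin_le:
  fixes X :: "real set"
  assumes "X \<noteq> {}" "bdd_above X" "0 \<le> a" "\<And>x. x \<in> X \<Longrightarrow> a * x \<le> d"
  shows "a * Sup X \<le> d"
proof (cases "a = 0")
  case True
  then obtain x where "x \<in> X" using assms by auto
  thus ?thesis using assms True by force
next
  case False
  hence a: "a > 0" using assms by simp
  have "Sup X \<le> d / a" using assms a by (intro cSup_least) (auto simp: field_simps)
  thus ?thesis using a by (simp add: field_simps)
qed

lemma sup_lin2_le:
  fixes X Y :: "real set"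
  assumes "X \<noteq> {}" "bdd_above X" "Y \<noteq> {}" "bdd_above Y" "0 \<le> a" "0 \<le> b"
    and "\<And>x y. x \<in> X \<Longrightarrow> y \<in> Y \<Longrightarrow> a * x + b * y \<le> c"
  shows "a * Sup X + b * Sup Y \<le> c"
proof -
  have "\<And>y. y \<in> Y \<Longrightarrow> a * Sup X \<le> c - b * y"
  proof -
    fix y assume y: "y \<in> Y"
    show "a * Sup X \<le> c - b * y"
      using assms(1,2,5) by (rule sup_lin_le) (use assms(7)[OF _ y] in force)
  qed
  hence "\<And>y. y \<in> Y \<Longrightarrow> b * y \<le> c - a * Sup X" by fastforce
  hence "b * Sup Y \<le> c - a * Sup X" using assms by (intro sup_lin_le) auto
  thus ?thesis by simp
qed

definition GSet where
  "GSet n m q rho xi i z = {(\<Sum>j=1..m. x j * xi i j) | x.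
      (\<forall>j\<in>{1..m}. 0 \<le> x j \<and> x j \<le> q i j) \<and>
      (\<Sum>j=1..m. x j) \<le> z \<and>
      (\<Sum>j=1..m. x j * rho i j) \<ge> rhoE n m q rho * (\<Sum>j=1..m. x j)}"

lemma gfun_GSet: "gfun n m q rho xi i z = Sup (GSet n m q rho xi i z)"
  unfolding gfun_def GSet_def by simp

context
  fixes n m :: nat and q rho xi :: "nat \<Rightarrow> nat \<Rightarrow> real" and i :: nat
  assumes qnn: "\<forall>j\<in>{1..m}. 0 \<le> q i j"
begin

lemma GSet_ne: "0 \<le> z \<Longrightarrow> GSet n m q rho xi i z \<noteq> {}"
  unfolding GSet_def using qnn
  by (rule_tac ccontr) (auto dest!: spec[of _ "\<lambda>_. 0"])

lemma GSet_bdd_le: "y \<in> GSet n m q rho xi i z \<Longrightarrow> y \<le> (\<Sum>j=1..m. q i j * \<bar>xi i j\<bar>)"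
proof -
  assume "y \<in> GSet n m q rho xi i z"
  then obtain x where y: "y = (\<Sum>j=1..m. x j * xi i j)" and x: "\<forall>j\<in>{1..m}. 0 \<le> x j \<and> x j \<le> q i j"
    unfolding GSet_def by blast
  show "y \<le> (\<Sum>j=1..m. q i j * \<bar>xi i j\<bar>)"
    unfolding y
  proof (rule sum_mono)
    fix j assume "j \<in> {1..m}"
    hence "0 \<le> x j" "x j \<le> q i j" using x by auto
    hence "x j * xi i j \<le> x j * \<bar>xi i j\<bar>" by (simp add: mult_left_mono)
    also have "\<dots> \<le> q i j * \<bar>xi i j\<bar>" using \<open>x j \<le> q i j\<close> by (simp add: mult_right_mono)
    finally show "x j * xi i j \<le> q i j * \<bar>xi i j\<bar>" .
  qed
qed

lemma GSet_bdd: "bdd_above (GSet n m q rho xi i z)"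
  using GSet_bdd_le by (meson bdd_aboveI)

lemma gfun_le: "0 \<le> z \<Longrightarrow> gfun n m q rho xi i z \<le> (\<Sum>j=1..m. q i j * \<bar>xi i j\<bar>)"
  unfolding gfun_GSet using GSet_ne GSet_bdd_le by (intro cSup_least) auto

lemma gfun_upper:
  assumes "\<forall>j\<in>{1..m}. 0 \<le> x j \<and> x j \<le> q i j" "(\<Sum>j=1..m. x j) \<le> z"
    "(\<Sum>j=1..m. x j * rho i j) \<ge> rhoE n m q rho * (\<Sum>j=1..m. x j)"
  shows "(\<Sum>j=1..m. x j * xi i j) \<le> gfun n m q rho xi i z"
  unfolding gfun_GSet using assms by (intro cSup_upper[OF _ GSet_bdd]) (auto simp: GSet_def)

lemma gfun_nonneg: "0 \<le> z \<Longrightarrow> 0 \<le> gfun n m q rho xi i z"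
proof -
  assume z: "0 \<le> z"
  have "(\<Sum>j=1..m. (\<lambda>_. 0) j * xi i j) \<le> gfun n m q rho xi i z"
    by (rule gfun_upper) (use qnn z in auto)
  thus ?thesis by simp
qed

lemma gfun_concave:
  assumes "0 \<le> z" "0 \<le> z'" "0 \<le> l" "l \<le> 1"
  shows "l * gfun n m q rho xi i z + (1-l) * gfun n m q rho xi i z'
          \<le> gfun n m q rho xi i (l*z + (1-l)*z')"
  unfolding gfun_GSet[of _ _ _ _ _ _ z] gfun_GSet[of _ _ _ _ _ _ z']
proof (rule sup_lin2_le[OF GSet_ne GSet_bdd GSet_ne GSet_bdd])
  show "0 \<le> z" "0 \<le> z'" "0 \<le> l" "0 \<le> 1 - l" using assms by auto
  fix a b assume "a \<in> GSet n m q rho xi i z" "b \<in> GSet n m q rho xi i z'"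
  then obtain x y where a: "a = (\<Sum>j=1..m. x j * xi i j)" and
    x: "\<forall>j\<in>{1..m}. 0 \<le> x j \<and> x j \<le> q i j" "(\<Sum>j=1..m. x j) \<le> z"
       "(\<Sum>j=1..m. x j * rho i j) \<ge> rhoE n m q rho * (\<Sum>j=1..m. x j)"
    and b: "b = (\<Sum>j=1..m. y j * xi i j)" and
    y: "\<forall>j\<in>{1..m}. 0 \<le> y j \<and> y j \<le> q i j" "(\<Sum>j=1..m. y j) \<le> z'"
       "(\<Sum>j=1..m. y j * rho i j) \<ge> rhoE n m q rho * (\<Sum>j=1..m. y j)"
    unfolding GSet_def by blast
  define c where "c j = l * x j + (1-l) * y j" for j
  have sc: "(\<Sum>j=1..m. c j * f j) = l * (\<Sum>j=1..m. x j * f j) + (1-l) * (\<Sum>j=1..m. y j * f j)" for f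
  proof -
    have "(\<Sum>j=1..m. c j * f j) = (\<Sum>j=1..m. l * (x j * f j) + (1-l) * (y j * f j))"
      by (intro sum.cong) (auto simp: c_def algebra_simps)
    thus ?thesis by (simp add: sum.distrib sum_distrib_left)
  qed
  have sc1: "(\<Sum>j=1..m. c j) = l * (\<Sum>j=1..m. x j) + (1-l) * (\<Sum>j=1..m. y j)"
    by (simp add: c_def sum.distrib sum_distrib_left)
  have c1: "\<forall>j\<in>{1..m}. 0 \<le> c j \<and> c j \<le> q i j"
  proof
    fix j assume j: "j \<in> {1..m}"
    have "l * x j \<le> l * q i j" "(1-l) * y j \<le> (1-l) * q i j"
      using x y j assms by (auto intro: mult_left_mono)
    moreover have "0 \<le> l * x j" "0 \<le> (1-l) * y j" using x y j assms by auto
    ultimately show "0 \<le> c j \<and> c j \<le> q i j" unfolding c_def by (auto simp: algebra_simps)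
  qed
  have "l * (\<Sum>j=1..m. x j) \<le> l * z" "(1-l) * (\<Sum>j=1..m. y j) \<le> (1-l) * z'"
    using x y assms by (auto intro: mult_left_mono)
  hence c2: "(\<Sum>j=1..m. c j) \<le> l*z + (1-l)*z'" using sc1 by linarith
  have "l * (rhoE n m q rho * (\<Sum>j=1..m. x j)) \<le> l * (\<Sum>j=1..m. x j * rho i j)"
       "(1-l) * (rhoE n m q rho * (\<Sum>j=1..m. y j)) \<le> (1-l) * (\<Sum>j=1..m. y j * rho i j)"
    using x y assms by (auto intro: mult_left_mono)
  then have c3: "(\<Sum>j=1..m. c j * rho i j) \<ge> rhoE n m q rho * (\<Sum>j=1..m. c j)"
  proof -
    have "rhoE n m q rho * (\<Sum>j=1..m. c j) = l * (rhoE n m q rho * (\<Sum>j=1..m. x j)) + (1-l) * (rhoE n m q rho * (\<Sum>j=1..m. y j))"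
      unfolding sc1 by (simp add: algebra_simps)
    thus ?thesis using sc[of "rho i"] \<open>l * (rhoE n m q rho * (\<Sum>j=1..m. x j)) \<le> l * (\<Sum>j=1..m. x j * rho i j)\<close>
      \<open>(1-l) * (rhoE n m q rho * (\<Sum>j=1..m. y j)) \<le> (1-l) * (\<Sum>j=1..m. y j * rho i j)\<close> by linarith
  qed
  have "(\<Sum>j=1..m. c j * xi i j) \<le> gfun n m q rho xi i (l*z + (1-l)*z')"
    by (rule gfun_upper[OF c1 c2 c3])
  thus "l * a + (1 - l) * b \<le> gfun n m q rho xi i (l * z + (1 - l) * z')"
    using sc[of "xi i"] a b by simp
qed

lemma gfun_twopoint:
  assumes "0 \<le> x" "0 \<le> y" "0 \<le> l" "l \<le> 1"
  shows "gfun n m q rho xi i x + gfun n m q rho xi i y \<le>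
         gfun n m q rho xi i (l*x+(1-l)*y) + gfun n m q rho xi i ((1-l)*x + l*y)"
proof -
  have "l * gfun n m q rho xi i x + (1-l) * gfun n m q rho xi i y \<le> gfun n m q rho xi i (l*x+(1-l)*y)"
    using assms by (intro gfun_concave) auto
  moreover have "(1-l) * gfun n m q rho xi i x + (1-(1-l)) * gfun n m q rho xi i y \<le> gfun n m q rho xi i ((1-l)*x+(1-(1-l))*y)"
    using assms by (intro gfun_concave) auto
  ultimately show ?thesis by (simp add: algebra_simps)
qed

end

lemma gfun_good:
  assumes "\<forall>i\<in>{1..n}. \<forall>j\<in>{1..m}. 0 \<le> q i j"
  shows "goodG (gfun n m q rho xi) {1..n} (\<lambda>i. \<Sum>j=1..m. q i j * \<bar>xi i j\<bar>)"
  unfolding goodG_def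
proof (intro conjI ballI allI impI)
  fix i z assume i: "i \<in> {1..n}" and z: "(0::real) \<le> z"
  have qi: "\<forall>j\<in>{1..m}. 0 \<le> q i j" using assms i by auto
  show "0 \<le> gfun n m q rho xi i z" by (rule gfun_nonneg[where q=q and i=i and m=m, OF qi z])
  show "gfun n m q rho xi i z \<le> (\<Sum>j=1..m. q i j * \<bar>xi i j\<bar>)" by (rule gfun_le[where q=q and i=i and m=m, OF qi z])
next
  fix i and x y l :: real assume i: "i \<in> {1..n}" and h: "(0::real) \<le> x" "0 \<le> y" "0 \<le> l \<and> l \<le> 1"
  have qi: "\<forall>j\<in>{1..m}. 0 \<le> q i j" using assms i by auto
  show "gfun n m q rho xi i x + gfun n m q rho xi i y \<le>
         gfun n m q rho xi i (l*x+(1-l)*y) + gfun n m q rho xi i ((1-l)*x + l*y)"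
    using h by (intro gfun_twopoint[where q=q and i=i and m=m, OF qi]) auto
qed

lemma ffun_HH: "ffun n m q rho xi S = HH (gfun n m q rho xi) (insert n S)"
  unfolding ffun_def HH_def HS_def by simp



lemma states_mem: "\<theta> \<in> states n m \<Longrightarrow> i \<in> {1..n} \<Longrightarrow> \<theta> i \<in> {1..m}"
  unfolding states_def by (auto simp: PiE_iff)

lemma finite_states: "finite (states n m)"
  unfolding states_def by (auto intro!: finite_PiE)

lemma prior_nonneg:
  assumes "\<forall>i\<in>{1..n}. \<forall>j\<in>{1..m}. 0 \<le> q i j" "\<theta> \<in> states n m"
  shows "0 \<le> prior n q \<theta>"
  unfolding prior_def using assms states_mem by (intro prod_nonneg) blast

lemma sum_prior_fix:
  assumes q1: "\<forall>i\<in>{1..n}. (\<Sum>j=1..m. q i j) = 1" and a: "a \<in> {1..n}" and j: "j \<in> {1..m}"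
  shows "(\<Sum>\<theta>\<in>states n m. if \<theta> a = j then prior n q \<theta> else 0) = q a j"
proof -
  define B where "B i = (if i = a then {j} else {1..m})" for i
  have eq: "{\<theta>\<in>states n m. \<theta> a = j} = PiE {1..n} B"
  proof (rule set_eqI)
    fix \<theta> :: "nat \<Rightarrow> nat"
    show "\<theta> \<in> {\<theta>\<in>states n m. \<theta> a = j} \<longleftrightarrow> \<theta> \<in> PiE {1..n} B"
    proof
      assume "\<theta> \<in> {\<theta>\<in>states n m. \<theta> a = j}"
      thus "\<theta> \<in> PiE {1..n} B" unfolding states_def B_def PiE_iff by auto
    next
      assume h: "\<theta> \<in> PiE {1..n} B"
      have "\<forall>i\<in>{1..n}. \<theta> i \<in> {1..m}"
      proof
        fix i assume "i \<in> {1..n}"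
        hence "\<theta> i \<in> B i" using h by (auto simp: PiE_iff)
        thus "\<theta> i \<in> {1..m}" using j unfolding B_def by (cases "i = a") auto
      qed
      moreover have "\<theta> a \<in> B a" using h a by (auto simp: PiE_iff)
      ultimately show "\<theta> \<in> {\<theta>\<in>states n m. \<theta> a = j}" using h a unfolding states_def PiE_iff by (auto simp: B_def)
    qed
  qed
  have "(\<Sum>\<theta>\<in>states n m. if \<theta> a = j then prior n q \<theta> else 0) = (\<Sum>\<theta>\<in>{\<theta>\<in>states n m. \<theta> a = j}. prior n q \<theta>)"
    using finite_states by (simp add: sum.inter_filter)
  also have "\<dots> = (\<Sum>g\<in>PiE {1..n} B. \<Prod>i\<in>{1..n}. q i (g i))" unfolding eq prior_def ..
  also have "\<dots> = (\<Prod>i\<in>{1..n}. \<Sum>y\<in>B i. q i y)"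
    by (rule prod_sum_PiE[symmetric]) (auto simp: B_def)
  also have "\<dots> = (\<Prod>i\<in>{1..n}. if i = a then q a j else 1)"
    using q1 by (intro prod.cong) (auto simp: B_def)
  also have "\<dots> = q a j" using a by (simp add: prod.If_cases)
  finally show ?thesis .
qed

lemma sum_prior_one:
  assumes q1: "\<forall>i\<in>{1..n}. (\<Sum>j=1..m. q i j) = 1"
  shows "(\<Sum>\<theta>\<in>states n m. prior n q \<theta>) = 1"
proof -
  have "(\<Sum>\<theta>\<in>states n m. prior n q \<theta>) = (\<Sum>g\<in>PiE {1..n} (\<lambda>_. {1..m}). \<Prod>i\<in>{1..n}. q i (g i))"
    unfolding states_def prior_def ..
  also have "\<dots> = (\<Prod>i\<in>{1..n}. \<Sum>y\<in>{1..m}. q i y)"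
    by (rule prod_sum_PiE[symmetric]) auto
  also have "\<dots> = 1" using q1 by simp
  finally show ?thesis .
qed

lemma group_states:
  assumes a: "a \<in> {1..n}"
  shows "(\<Sum>\<theta>\<in>states n m. h \<theta> (\<theta> a)) = (\<Sum>j=1..m. \<Sum>\<theta>\<in>states n m. if \<theta> a = j then h \<theta> j else (0::real))"
proof -
  have "(\<Sum>j=1..m. \<Sum>\<theta>\<in>states n m. if \<theta> a = j then h \<theta> j else (0::real))
      = (\<Sum>\<theta>\<in>states n m. \<Sum>j=1..m. if \<theta> a = j then h \<theta> j else 0)" by (rule sum.swap)
  also have "\<dots> = (\<Sum>\<theta>\<in>states n m. h \<theta> (\<theta> a))"
  proof (rule sum.cong)
    fix \<theta> assume "\<theta> \<in> states n m"
    hence "\<theta> a \<in> {1..m}" using states_mem a by blast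
    thus "(\<Sum>j=1..m. if \<theta> a = j then h \<theta> j else 0) = h \<theta> (\<theta> a)"
      by (simp add: sum.delta[OF finite_atLeastAtMost] eq_commute[of "\<theta> a"] cong: if_cong)
  qed simp
  finally show ?thesis by simp
qed

definition XX where
  "XX n m q \<phi> s a j = (\<Sum>\<theta>\<in>states n m. if \<theta> a = j then prior n q \<theta> * \<phi> \<theta> s else 0)"

lemma joint_val_XX:
  assumes "a \<in> {1..n}"
  shows "joint_val n m q u \<phi> s a = (\<Sum>j=1..m. XX n m q \<phi> s a j * u a j)"
proof -
  have "joint_val n m q u \<phi> s a = (\<Sum>\<theta>\<in>states n m. (\<lambda>\<theta> j. prior n q \<theta> * \<phi> \<theta> s * u a j) \<theta> (\<theta> a))"
    unfolding joint_val_def by simp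
  also have "\<dots> = (\<Sum>j=1..m. \<Sum>\<theta>\<in>states n m. if \<theta> a = j then prior n q \<theta> * \<phi> \<theta> s * u a j else 0)"
    by (rule group_states[OF assms])
  also have "\<dots> = (\<Sum>j=1..m. XX n m q \<phi> s a j * u a j)"
    unfolding XX_def sum_distrib_right by (intro sum.cong refl) auto
  finally show ?thesis .
qed

lemma sig_prob_XX:
  assumes "a \<in> {1..n}"
  shows "sig_prob n m q \<phi> s = (\<Sum>j=1..m. XX n m q \<phi> s a j)"
proof -
  have "sig_prob n m q \<phi> s = (\<Sum>\<theta>\<in>states n m. (\<lambda>\<theta> j. prior n q \<theta> * \<phi> \<theta> s) \<theta> (\<theta> a))"
    unfolding sig_prob_def by simp
  also have "\<dots> = (\<Sum>j=1..m. XX n m q \<phi> s a j)"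
    unfolding XX_def by (rule group_states[OF assms])
  finally show ?thesis .
qed

lemma XX_nonneg:
  assumes "\<forall>i\<in>{1..n}. \<forall>j\<in>{1..m}. 0 \<le> q i j" "is_scheme n m k \<phi>" "s \<in> {1..k}"
  shows "0 \<le> XX n m q \<phi> s a j"
  unfolding XX_def using assms prior_nonneg[OF assms(1)] unfolding is_scheme_def
  by (intro sum_nonneg) auto

lemma XX_sum:
  assumes q: "\<forall>i\<in>{1..n}. \<forall>j\<in>{1..m}. 0 \<le> q i j" and q1: "\<forall>i\<in>{1..n}. (\<Sum>j=1..m. q i j) = 1"
    and sch: "is_scheme n m k \<phi>" and a: "a \<in> {1..n}" and j: "j \<in> {1..m}"
  shows "(\<Sum>s=1..k. XX n m q \<phi> s a j) = q a j"
proof -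
  have "(\<Sum>s=1..k. XX n m q \<phi> s a j) = (\<Sum>\<theta>\<in>states n m. \<Sum>s=1..k. if \<theta> a = j then prior n q \<theta> * \<phi> \<theta> s else 0)"
    unfolding XX_def by (rule sum.swap)
  also have "\<dots> = (\<Sum>\<theta>\<in>states n m. if \<theta> a = j then prior n q \<theta> else 0)"
  proof (rule sum.cong)
    fix \<theta> assume th: "\<theta> \<in> states n m"
    have "(\<Sum>s=1..k. if \<theta> a = j then prior n q \<theta> * \<phi> \<theta> s else 0)
        = (if \<theta> a = j then prior n q \<theta> * (\<Sum>s=1..k. \<phi> \<theta> s) else 0)"
      by (simp add: sum_distrib_left)
    thus "(\<Sum>s=1..k. if \<theta> a = j then prior n q \<theta> * \<phi> \<theta> s else 0) = (if \<theta> a = j then prior n q \<theta> else 0)"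
      using sch th unfolding is_scheme_def by simp
  qed simp
  also have "\<dots> = q a j" by (rule sum_prior_fix[OF q1 a j])
  finally show ?thesis .
qed

lemma sig_prob_sum:
  assumes q1: "\<forall>i\<in>{1..n}. (\<Sum>j=1..m. q i j) = 1" and sch: "is_scheme n m k \<phi>"
  shows "(\<Sum>s=1..k. sig_prob n m q \<phi> s) = 1"
proof -
  have "(\<Sum>s=1..k. sig_prob n m q \<phi> s) = (\<Sum>\<theta>\<in>states n m. \<Sum>s=1..k. prior n q \<theta> * \<phi> \<theta> s)"
    unfolding sig_prob_def by (rule sum.swap)
  also have "\<dots> = (\<Sum>\<theta>\<in>states n m. prior n q \<theta>)"
    using sch unfolding is_scheme_def by (intro sum.cong) (auto simp: sum_distrib_left[symmetric])
  also have "\<dots> = 1" by (rule sum_prior_one[OF q1])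
  finally show ?thesis .
qed



lemma util_bound:
  assumes q: "\<forall>i\<in>{1..n}. \<forall>j\<in>{1..m}. 0 \<le> q i j" and q1: "\<forall>i\<in>{1..n}. (\<Sum>j=1..m. q i j) = 1"
    and n: "1 \<le> n" and sch: "is_scheme n m k \<phi>"
    and cond: "\<forall>s\<in>{1..k}. sig_prob n m q \<phi> s > 0 \<longrightarrow>
            receiver_cond_util n m q rho \<phi> s \<ge> rhoE n m q rho"
  shows "\<exists>OS. OS \<subseteq> {1..n-1} \<and> card OS \<le> k \<and> sender_util n m k q rho xi \<phi> \<le> ffun n m q rho xi OS"
proof -
  let ?BR = "best_responses n m q rho \<phi>"
  let ?JR = "joint_val n m q rho \<phi>"
  let ?JX = "joint_val n m q xi \<phi>"
  let ?X = "XX n m q \<phi>"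
  let ?R = "rhoE n m q rho"
  let ?G = "gfun n m q rho xi"
  have BRsub: "?BR s \<subseteq> {1..n}" for s unfolding best_responses_def by auto
  have BRfin: "finite (?BR s)" for s using BRsub finite_subset by blast
  have BRne: "?BR s \<noteq> {}" for s
  proof -
    have "Max (?JR s ` {1..n}) \<in> ?JR s ` {1..n}" using n by (intro Max_in) auto
    then obtain a0 where a0: "a0 \<in> {1..n}" "?JR s a0 = Max (?JR s ` {1..n})" by auto
    have "a0 \<in> ?BR s" unfolding best_responses_def using a0 by auto
    thus ?thesis by auto
  qed
  have exact: "\<exists>a. a \<in> ?BR s \<and> ?JX s a = Max (?JX s ` ?BR s)" for s
  proof -
    have "Max (?JX s ` ?BR s) \<in> ?JX s ` ?BR s" using BRfin BRne by (intro Max_in) auto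
    thus ?thesis by auto
  qed
  define act where "act s = (SOME a. a \<in> ?BR s \<and> ?JX s a = Max (?JX s ` ?BR s))" for s
  have act: "act s \<in> ?BR s" "?JX s (act s) = Max (?JX s ` ?BR s)" for s
    using someI_ex[OF exact[of s]] unfolding act_def by auto
  have actn: "act s \<in> {1..n}" for s using act BRsub by blast
  have actR: "?JR s (act s) = Max (?JR s ` {1..n})" for s
    using act(1)[of s] by (intro Max_eqI[symmetric]) (auto simp: best_responses_def)
  have Xnn: "s \<in> {1..k} \<Longrightarrow> 0 \<le> ?X s a j" for s a j by (rule XX_nonneg[OF q sch])
  have obey: "(\<Sum>j=1..m. ?X s (act s) j * rho (act s) j) \<ge> ?R * (\<Sum>j=1..m. ?X s (act s) j)"
    if s: "s \<in> {1..k}" for s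
  proof -
    have sp: "sig_prob n m q \<phi> s = (\<Sum>j=1..m. ?X s (act s) j)" by (rule sig_prob_XX[OF actn])
    have jr: "?JR s (act s) = (\<Sum>j=1..m. ?X s (act s) j * rho (act s) j)" by (rule joint_val_XX[OF actn])
    have sp0: "0 \<le> sig_prob n m q \<phi> s" unfolding sp using Xnn[OF s] by (intro sum_nonneg) auto
    show ?thesis
    proof (cases "sig_prob n m q \<phi> s > 0")
      case True
      hence "?R \<le> Max (?JR s ` {1..n}) / sig_prob n m q \<phi> s"
        using cond s unfolding receiver_cond_util_def by auto
      hence "?R * sig_prob n m q \<phi> s \<le> Max (?JR s ` {1..n})" using True by (simp add: pos_le_divide_eq)
      thus ?thesis using sp jr actR[of s] by simp
    next
      case False
      hence "(\<Sum>j=1..m. ?X s (act s) j) = 0" using sp sp0 by simp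
      hence "\<forall>j\<in>{1..m}. ?X s (act s) j = 0" using Xnn[OF s] by (subst (asm) sum_nonneg_eq_0_iff) auto
      thus ?thesis by simp
    qed
  qed
  define T where "T = act ` {1..k}"
  define Y where "Y b j = (\<Sum>s\<in>{s\<in>{1..k}. act s = b}. ?X s b j)" for b j
  define zz where "zz b = (\<Sum>s\<in>{s\<in>{1..k}. act s = b}. sig_prob n m q \<phi> s)" for b
  have Tsub: "T \<subseteq> {1..n}" using actn T_def by auto
  have finT: "finite T" unfolding T_def by simp
  have feas: "(\<Sum>j=1..m. Y b j * xi b j) \<le> ?G b (zz b)" if b: "b \<in> T" for b
  proof (rule gfun_upper)
    have bn: "b \<in> {1..n}" using b Tsub by auto
    show "\<forall>j\<in>{1..m}. 0 \<le> q b j" using q bn by auto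
    show "\<forall>j\<in>{1..m}. 0 \<le> Y b j \<and> Y b j \<le> q b j"
    proof
      fix j assume j: "j \<in> {1..m}"
      have "Y b j \<le> (\<Sum>s=1..k. ?X s b j)"
        unfolding Y_def using Xnn by (intro sum_mono2) auto
      also have "\<dots> = q b j" by (rule XX_sum[OF q q1 sch bn j])
      finally show "0 \<le> Y b j \<and> Y b j \<le> q b j" unfolding Y_def using Xnn by (auto intro!: sum_nonneg)
    qed
    have "(\<Sum>j=1..m. Y b j) = (\<Sum>s\<in>{s\<in>{1..k}. act s = b}. \<Sum>j=1..m. ?X s b j)"
      unfolding Y_def by (rule sum.swap)
    also have "\<dots> = zz b" unfolding zz_def using sig_prob_XX[OF bn] by simp
    finally have sY: "(\<Sum>j=1..m. Y b j) = zz b" .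
    thus "(\<Sum>j=1..m. Y b j) \<le> zz b" by simp
    have "(\<Sum>j=1..m. Y b j * rho b j) = (\<Sum>s\<in>{s\<in>{1..k}. act s = b}. \<Sum>j=1..m. ?X s b j * rho b j)"
      unfolding Y_def sum_distrib_right by (rule sum.swap)
    also have "\<dots> \<ge> (\<Sum>s\<in>{s\<in>{1..k}. act s = b}. ?R * (\<Sum>j=1..m. ?X s b j))"
      using obey by (intro sum_mono) auto
    moreover have "(\<Sum>s\<in>{s\<in>{1..k}. act s = b}. ?R * (\<Sum>j=1..m. ?X s b j)) = ?R * (\<Sum>j=1..m. Y b j)"
      unfolding Y_def sum_distrib_left[symmetric] by (subst sum.swap) (rule refl)
    ultimately show "(\<Sum>j=1..m. Y b j * rho b j) \<ge> ?R * (\<Sum>j=1..m. Y b j)" by simp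
  qed
  have valY: "(\<Sum>j=1..m. Y b j * xi b j) = (\<Sum>s\<in>{s\<in>{1..k}. act s = b}. ?JX s (act s))"
    if b: "b \<in> T" for b
  proof -
    have bn: "b \<in> {1..n}" using b Tsub by auto
    have "(\<Sum>j=1..m. Y b j * xi b j) = (\<Sum>s\<in>{s\<in>{1..k}. act s = b}. \<Sum>j=1..m. ?X s b j * xi b j)"
      unfolding Y_def sum_distrib_right by (rule sum.swap)
    also have "\<dots> = (\<Sum>s\<in>{s\<in>{1..k}. act s = b}. ?JX s (act s))"
      using joint_val_XX[OF bn] by (intro sum.cong) auto
    finally show ?thesis .
  qed
  have "sender_util n m k q rho xi \<phi> = (\<Sum>s=1..k. ?JX s (act s))"
    unfolding sender_util_def using act by simp
  also have "\<dots> = (\<Sum>b\<in>T. \<Sum>s\<in>{s\<in>{1..k}. act s = b}. ?JX s (act s))"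
    unfolding T_def by (rule sum.image_gen) simp
  also have "\<dots> = (\<Sum>b\<in>T. \<Sum>j=1..m. Y b j * xi b j)" using valY by simp
  also have "\<dots> \<le> (\<Sum>b\<in>T. ?G b (zz b))" using feas by (intro sum_mono) auto
  finally have u1: "sender_util n m k q rho xi \<phi> \<le> (\<Sum>b\<in>T. ?G b (zz b))" .
  have spnn: "0 \<le> sig_prob n m q \<phi> s" if s: "s \<in> {1..k}" for s
    unfolding sig_prob_XX[OF actn[of s]] using Xnn[OF s] by (auto intro!: sum_nonneg)
  have zznn: "0 \<le> zz b" for b
    unfolding zz_def using spnn by (auto intro!: sum_nonneg)
  have zzT: "(\<Sum>b\<in>T. zz b) = 1"
  proof -
    have "(\<Sum>b\<in>T. zz b) = (\<Sum>s=1..k. sig_prob n m q \<phi> s)"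
      unfolding T_def zz_def by (rule sum.image_gen[symmetric]) simp
    thus ?thesis using sig_prob_sum[OF q1 sch] by simp
  qed
  have good: "goodG ?G {1..n} (\<lambda>i. \<Sum>j=1..m. q i j * \<bar>xi i j\<bar>)" by (rule gfun_good[OF q])
  have nT: "insert n T \<subseteq> {1..n}" using Tsub n by auto
  have "(\<Sum>b\<in>T. ?G b (zz b)) \<le> (\<Sum>b\<in>insert n T. ?G b (zz b))"
  proof (cases "n \<in> T")
    case False
    have "0 \<le> ?G n (zz n)" using good n zznn unfolding goodG_def by auto
    thus ?thesis using False finT by simp
  qed (simp add: insert_absorb)
  also have "\<dots> \<le> HH ?G (insert n T)"
  proof (rule HS_upper[OF good nT])
    show "\<forall>i\<in>insert n T. 0 \<le> zz i" using zznn by auto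
    have "(\<Sum>b\<in>insert n T. zz b) = 1"
    proof (cases "n \<in> T")
      case False
      hence "zz n = 0" unfolding zz_def T_def by (auto intro!: sum.neutral)
      thus ?thesis using False finT zzT by simp
    qed (use zzT in \<open>simp add: insert_absorb\<close>)
    thus "(\<Sum>b\<in>insert n T. zz b) \<le> 1" by simp
  qed
  also have "HH ?G (insert n T) = ffun n m q rho xi (T - {n})" by (simp add: ffun_HH)
  finally have "sender_util n m k q rho xi \<phi> \<le> ffun n m q rho xi (T - {n})" using u1 by linarith
  moreover have "T - {n} \<subseteq> {1..n-1}" using Tsub by auto
  moreover have "card (T - {n}) \<le> k"
  proof -
    have "card (T - {n}) \<le> card T" using finT by (intro card_mono) auto
    also have "\<dots> \<le> card {1..k}" unfolding T_def by (rule card_image_le) simp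
    finally show ?thesis by simp
  qed
  ultimately show ?thesis by blast
qed



primrec glist :: "(nat set \<Rightarrow> nat) \<Rightarrow> nat \<Rightarrow> nat list" where
  "glist F 0 = []"
| "glist F (Suc t) = glist F t @ [F (set (glist F t))]"

lemma glist_len: "length (glist F t) = t" by (induction t) auto

lemma glist_take: "t \<le> t' \<Longrightarrow> take t (glist F t') = glist F t"
proof (induction t')
  case 0 thus ?case by simp
next
  case (Suc t')
  show ?case
  proof (cases "t = Suc t'")
    case True thus ?thesis using glist_len[of F "Suc t'"] by simp
  next
    case False
    hence "t \<le> t'" using Suc by simp
    thus ?thesis using Suc glist_len[of F t'] by simp
  qed
qed

lemma glist_nth: "t < t' \<Longrightarrow> glist F t' ! t = F (set (glist F t))"
proof (induction t')
  case 0 thus ?case by simp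
next
  case (Suc t')
  show ?case
  proof (cases "t = t'")
    case True thus ?thesis using glist_len[of F t'] by (simp add: nth_append)
  next
    case False
    hence "t < t'" using Suc by simp
    thus ?thesis using Suc glist_len[of F t'] by (simp add: nth_append)
  qed
qed

lemma argmax_ex:
  fixes f :: "nat \<Rightarrow> real"
  assumes "finite A" "A \<noteq> {}"
  shows "\<exists>x\<in>A. \<forall>y\<in>A. f y \<le> f x"
proof -
  have "Max (f ` A) \<in> f ` A" using assms by (intro Max_in) auto
  then obtain x where "x \<in> A" "f x = Max (f ` A)" by auto
  thus ?thesis using assms by (metis Max_ge finite_imageI image_eqI)
qed

lemma greedy_exists:
  assumes "k \<le> n" "1 \<le> k"
  shows "\<exists>xs. greedy_run n m k q rho xi xs"
proof -
  let ?f = "ffun n m q rho xi"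
  define F where "F S = (SOME i. i \<in> {1..n-1} - S \<and>
      (\<forall>i'\<in>{1..n-1} - S. ?f (insert i' S) - ?f S \<le> ?f (insert i S) - ?f S))" for S
  define xs where "xs = glist F (k-1)"
  have "greedy_run n m k q rho xi xs"
    unfolding greedy_run_def
  proof (intro conjI allI impI)
    show "length xs = k - 1" unfolding xs_def by (rule glist_len)
    fix t assume t: "t < k - 1"
    let ?S = "set (take t xs)"
    have tx: "take t xs = glist F t" unfolding xs_def using t by (intro glist_take) simp
    have nx: "xs ! t = F ?S" unfolding tx unfolding xs_def using t by (simp add: glist_nth)
    have "card ?S \<le> t" using card_length[of "take t xs"] tx glist_len[of F t] by simp
    hence ne: "{1..n-1} - ?S \<noteq> {}"
    proof -
      assume c: "card ?S \<le> t"
      show ?thesis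
      proof
        assume "{1..n-1} - ?S = {}"
        hence "{1..n-1} \<subseteq> ?S" by auto
        hence "card {1..n-1} \<le> card ?S" by (intro card_mono) auto
        thus False using c t assms by simp
      qed
    qed
    have "\<exists>i\<in>{1..n-1} - ?S. \<forall>i'\<in>{1..n-1} - ?S. ?f (insert i' ?S) - ?f ?S \<le> ?f (insert i ?S) - ?f ?S"
      by (rule argmax_ex[OF _ ne]) simp
    then obtain i0 where i0: "i0 \<in> {1..n-1} - ?S \<and> (\<forall>i'\<in>{1..n-1} - ?S. ?f (insert i' ?S) - ?f ?S \<le> ?f (insert i0 ?S) - ?f ?S)" by blast
    define P where "P i = (i \<in> {1..n-1} - ?S \<and> (\<forall>i'\<in>{1..n-1} - ?S. ?f (insert i' ?S) - ?f ?S \<le> ?f (insert i ?S) - ?f ?S))" for i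
    have FP: "F ?S = (SOME i. P i)" unfolding F_def P_def ..
    have "P (SOME i. P i)" using i0 unfolding P_def[symmetric] by (rule someI)
    hence "P (F ?S)" unfolding FP .
    hence "F ?S \<in> {1..n-1} - ?S \<and> (\<forall>i'\<in>{1..n-1} - ?S. ?f (insert i' ?S) - ?f ?S \<le> ?f (insert (F ?S) ?S) - ?f ?S)"
      unfolding P_def .
    thus "xs ! t \<in> {1..n-1} - ?S"
      "\<forall>i\<in>{1..n-1} - ?S. ?f (insert i ?S) - ?f ?S \<le> ?f (insert (xs ! t) ?S) - ?f ?S"
      using nx by auto
  qed
  thus ?thesis by blast
qed



lemma greedy_props:
  assumes "greedy_run n m k q rho xi xs"
  shows "set xs \<subseteq> {1..n-1}" "distinct xs" "card (set xs) = k - 1"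
proof -
  have len: "length xs = k - 1" and g: "\<And>t. t < k - 1 \<Longrightarrow> xs ! t \<in> {1..n-1} - set (take t xs)"
    using assms unfolding greedy_run_def by auto
  show "set xs \<subseteq> {1..n-1}" using g len by (auto simp: in_set_conv_nth)
  show d: "distinct xs"
  proof (subst distinct_conv_nth, intro allI impI)
    fix i j assume ij: "i < length xs" "j < length xs" "i \<noteq> j"
    show "xs ! i \<noteq> xs ! j"
    proof (cases "i < j")
      case True
      hence "xs ! i \<in> set (take j xs)" using ij by (auto simp: in_set_conv_nth)
      thus ?thesis using g[of j] ij len by auto
    next
      case False
      hence "j < i" using ij by simp
      hence "xs ! j \<in> set (take i xs)" using ij by (metis nth_mem nth_take length_take min_less_iff_conj)
      thus ?thesis using g[of i] ij len by auto
    qed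
  qed
  show "card (set xs) = k - 1" using distinct_card[OF d] len by simp
qed

lemma greedy_bound:
  assumes q: "\<forall>i\<in>{1..n}. \<forall>j\<in>{1..m}. 0 \<le> q i j" and n: "1 \<le> n" and k: "1 \<le> k"
    and gr: "greedy_run n m k q rho xi xs" and OS: "OS \<subseteq> {1..n-1}" "card OS \<le> k"
  shows "ffun n m q rho xi (set xs) \<ge> (1 - (1 - 1 / real k) ^ (k - 1)) * ffun n m q rho xi OS"
proof -
  let ?G = "gfun n m q rho xi"
  let ?f = "ffun n m q rho xi"
  define c where "c = 1 - 1 / real k"
  have c01: "0 \<le> c" "c \<le> 1" using k by (auto simp: c_def)
  have good: "goodG ?G {1..n} (\<lambda>i. \<Sum>j=1..m. q i j * \<bar>xi i j\<bar>)" by (rule gfun_good[OF q])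
  define FF where "FF t = ?f (set (take t xs))" for t
  define V where "V = ?f OS"
  have len: "length xs = k - 1" using gr unfolding greedy_run_def by (rule conjunct1)
  have finOS: "finite OS" using OS finite_subset by blast
  have "n \<notin> {1..n-1}" using n by simp
  hence nOS: "n \<notin> OS" using OS(1) by blast
  have "{1..n-1} \<subseteq> {1..n}" by auto
  hence OSn: "OS \<subseteq> {1..n}" using OS(1) by blast
  have step: "V - FF (Suc t) \<le> c * (V - FF t)" if t: "t < k - 1" for t
  proof -
    let ?S = "set (take t xs)"
    let ?A = "insert n ?S"
    note gt0 = conjunct2[OF gr[unfolded greedy_run_def], rule_format, OF t]
    note gt = conjunct1[OF gt0] conjunct2[OF gt0]
    have Ssub: "?S \<subseteq> {1..n-1}" using set_take_subset greedy_props(1)[OF gr] by (rule subset_trans)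
    have nn1: "{1..n-1} \<subseteq> {1..n}" by auto
    have nin: "n \<in> {1..n}" using n by simp
    have Asub: "?A \<subseteq> {1..n}" using Ssub nn1 nin by blast
    have finA: "finite ?A" by simp
    have FS: "FF (Suc t) = ?f (insert (xs ! t) ?S)"
      unfolding FF_def using t len by (simp add: take_Suc_conv_app_nth)
    define \<delta> where "\<delta> = FF (Suc t) - FF t"
    have deq: "\<delta> = ?f (insert (xs ! t) ?S) - ?f ?S" by (simp only: \<delta>_def FS) (simp only: FF_def)
    have dnn: "0 \<le> \<delta>"
    proof -
      have "HH ?G ?A \<le> HH ?G (insert n (insert (xs ! t) ?S))"
        using Asub gt(1) n by (intro HH_mono[OF good]) auto
      thus ?thesis unfolding deq ffun_HH by simp
    qed
    define D where "D = OS - ?A"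
    have DA: "D \<inter> ?A = {}" "finite D" "D \<subseteq> {1..n}" using finOS OS n unfolding D_def by auto
    have V1: "V = HH ?G (insert n OS)" unfolding V_def ffun_HH by (rule refl)
    have V2: "HH ?G (insert n OS) \<le> HH ?G (?A \<union> D)"
      using Asub OSn finOS nin by (intro HH_mono[OF good]) (auto simp: D_def)
    have V3: "HH ?G (?A \<union> D) \<le> HH ?G ?A + (\<Sum>d\<in>D. HH ?G (insert d ?A) - HH ?G ?A)"
      using HH_subadd[OF good DA(2,3,1) finA Asub] by simp
    have V4: "(\<Sum>d\<in>D. HH ?G (insert d ?A) - HH ?G ?A) \<le> (\<Sum>d\<in>D. \<delta>)"
    proof (rule sum_mono)
      fix d assume d: "d \<in> D"
      hence "d \<in> {1..n-1} - ?S" using OS unfolding D_def by auto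
      hence "?f (insert d ?S) - ?f ?S \<le> ?f (insert (xs ! t) ?S) - ?f ?S" using gt(2) by blast
      also have "\<dots> = \<delta>" by (rule deq[symmetric])
      finally have "?f (insert d ?S) - ?f ?S \<le> \<delta>" .
      moreover have "insert d ?A = insert n (insert d ?S)" by auto
      ultimately show "HH ?G (insert d ?A) - HH ?G ?A \<le> \<delta>" by (simp add: ffun_HH)
    qed
    have V5: "(\<Sum>d\<in>D. \<delta>) = card D * \<delta>" by simp
    have V6: "card D * \<delta> \<le> k * \<delta>"
    proof -
      have "card D \<le> card OS" unfolding D_def using finOS by (intro card_mono) auto
      hence "real (card D) \<le> real k" using OS by simp
      thus ?thesis using dnn by (intro mult_right_mono) auto
    qed
    have "V \<le> HH ?G ?A + k * \<delta>" using V1 V2 V3 V4 V5 V6 by linarith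
    hence "V \<le> FF t + k * \<delta>" unfolding FF_def ffun_HH .
    hence "V - FF t \<le> k * \<delta>" by linarith
    hence "(V - FF t) / k \<le> \<delta>" using k by (simp add: divide_le_eq mult.commute)
    hence "V - FF (Suc t) \<le> (V - FF t) - (V - FF t) / k" unfolding \<delta>_def by simp
    also have "\<dots> = c * (V - FF t)" unfolding c_def by (simp add: algebra_simps)
    finally show ?thesis .
  qed
  have ind: "t \<le> k - 1 \<Longrightarrow> V - FF t \<le> c ^ t * (V - FF 0)" for t
  proof (induction t)
    case 0 thus ?case by simp
  next
    case (Suc t)
    hence "V - FF (Suc t) \<le> c * (V - FF t)" using step by simp
    also have "\<dots> \<le> c * (c ^ t * (V - FF 0))" using Suc c01 by (intro mult_left_mono) auto
    finally show ?case by simp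
  qed
  have F0: "0 \<le> FF 0" unfolding FF_def ffun_HH using good n by (intro HH_nonneg[OF good]) auto
  have "V - FF (k-1) \<le> c ^ (k-1) * (V - FF 0)" by (rule ind) simp
  also have "\<dots> \<le> c ^ (k-1) * V" using F0 c01 by (intro mult_left_mono) auto
  finally have "(1 - c^(k-1)) * V \<le> FF (k-1)" by (simp add: algebra_simps)
  moreover have "FF (k-1) = ?f (set xs)" unfolding FF_def using len by simp
  ultimately show ?thesis unfolding V_def c_def by simp
qed

theorem lemma4p4:
  fixes n m k :: nat and q rho xi :: "nat \<Rightarrow> nat \<Rightarrow> real"
    and \<phi>star :: "(nat \<Rightarrow> nat) \<Rightarrow> nat \<Rightarrow> real"
  assumes "2 \<le> k" and "k \<le> n"
    and "\<forall>i\<in>{1..n}. \<forall>j\<in>{1..m}. 0 \<le> q i j"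
    and "\<forall>i\<in>{1..n}. (\<Sum>j=1..m. q i j) = 1"
    and "(\<Sum>j=1..m. q n j * rho n j) = rhoE n m q rho"
    and "\<forall>i\<in>{1..n}. (\<Sum>j=1..m. q i j * rho i j) = rhoE n m q rho \<longrightarrow>
            (\<Sum>j=1..m. q i j * xi i j) \<le> (\<Sum>j=1..m. q n j * xi n j)"
    and "rhoE_optimal n m k q rho xi"
    and "optimal_scheme n m k q rho xi \<phi>star"
  shows "(\<exists>xs. greedy_run n m k q rho xi xs) \<and>
         (\<forall>xs. greedy_run n m k q rho xi xs \<longrightarrow>
            set xs \<subseteq> {1..n-1} \<and> card (set xs) = k - 1 \<and>
            ffun n m q rho xi (set xs)
              \<ge> (1 - (1 - 1 / real k) ^ (k - 1)) * sender_util n m k q rho xi \<phi>star)"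
proof (intro conjI allI impI)
  show "\<exists>xs. greedy_run n m k q rho xi xs" by (rule greedy_exists) (use assms(1,2) in simp_all)
  fix xs assume gr: "greedy_run n m k q rho xi xs"
  show "set xs \<subseteq> {1..n-1}" "card (set xs) = k - 1" using greedy_props[OF gr] by auto
  obtain \<phi> where phi: "optimal_scheme n m k q rho xi \<phi>"
    "\<forall>s\<in>{1..k}. sig_prob n m q \<phi> s > 0 \<longrightarrow> receiver_cond_util n m q rho \<phi> s \<ge> rhoE n m q rho"
    using assms(7) unfolding rhoE_optimal_def by blast
  have ueq: "sender_util n m k q rho xi \<phi>star = sender_util n m k q rho xi \<phi>"
  proof -
    have s1: "is_scheme n m k \<phi>" "is_scheme n m k \<phi>star"
      using phi(1) assms(8) unfolding optimal_scheme_def by auto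
    have "sender_util n m k q rho xi \<phi> \<le> sender_util n m k q rho xi \<phi>star"
      using assms(8) s1(1) unfolding optimal_scheme_def by blast
    moreover have "sender_util n m k q rho xi \<phi>star \<le> sender_util n m k q rho xi \<phi>"
      using phi(1) s1(2) unfolding optimal_scheme_def by blast
    ultimately show ?thesis by linarith
  qed
  obtain OS where OS: "OS \<subseteq> {1..n-1}" "card OS \<le> k"
    "sender_util n m k q rho xi \<phi> \<le> ffun n m q rho xi OS"
  proof -
    have "is_scheme n m k \<phi>" using phi(1) unfolding optimal_scheme_def by blast
    moreover have "1 \<le> n" using assms(1,2) by simp
    ultimately show ?thesis using util_bound[OF assms(3,4) _ _ phi(2)] that by blast
  qed
  have c0: "0 \<le> 1 - (1 - 1 / real k) ^ (k - 1)"
    using assms(1) by (intro diff_ge_0_iff_ge[THEN iffD2] power_le_one) auto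
  have "(1 - (1 - 1 / real k) ^ (k - 1)) * sender_util n m k q rho xi \<phi>star
        \<le> (1 - (1 - 1 / real k) ^ (k - 1)) * ffun n m q rho xi OS"
    using OS(3) ueq c0 by (intro mult_left_mono) auto
  also have "\<dots> \<le> ffun n m q rho xi (set xs)"
    by (rule greedy_bound[OF assms(3) _ _ gr OS(1,2)]) (use assms(1,2) in simp_all)
  finally show "ffun n m q rho xi (set xs) \<ge> (1 - (1 - 1 / real k) ^ (k - 1)) * sender_util n m k q rho xi \<phi>star" .
qed

end
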